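(* Let $n\ge1$ and let $f$ be a positive integral frieze on the orbifold $P_n^\star$, where $\star$ is an orbifold point of order $3$. Then there exists a unique triangulation $T$ of $P_n^\star$ such that $f(\tau)=1$ for all $\tau\in T$.
   Context: Let $p\ge2$ and $\lambda_p=2\cos(\pi/p)$. $P_n^\star$ is a polygon with boundary vertices $v_0,\ldots,v_{n-1}$ (clockwise, indices mod $n$) and one interior orbifold point $\star$ of order $p$; it is the quotient of the polygon $P_{pn}$ by rotation through $2\pi/p$. Arcs on $P_n^\star$ are the images of rotation-invariant orbits of diagonals (and boundary edges) of $P_{pn}$ that are pairwise non-crossing within the orbit; concretely they are: standard arcs $(v_i,v_j)$, $i\ne j$, the curve from $v_i$ to $v_j$ such that $v_{i+1},\ldots,v_{j-1}$ lie on the side not containing $\star$ (for $j=i+1$ this is a boundary segment), and pending arcs $(v_i,v_i)$, a loop at $v_i$ cutting out a monogon containing $\star$ (image of the orbit of the diameter-type diagonals $(u_i,u_{i+n})$ of $P_{pn}$). A triangulation of $P_n^\star$ is the image of a maximal rotation-invariant set of non-crossing diagonals of $P_{pn}$, equivalently a maximal set of pairwise non-crossing arcs. A frieze on $P_n^\star$ with values in an integral domain $R$ is a function $f$ from arcs to $R$ with $f(\gamma)=1$ for every boundary segment $\gamma$ and respecting skein relations: whenever arcs $\tau,\tau'$ cross at a point, $f(\tau)f(\tau')=f(\Gamma^+)+f(\Gamma^-)$ where $\Gamma^\pm$ are the two multicurves obtained by smoothing that crossing in the two possible ways, $f$ of a multicurve is the product over its components, self-crossings produced are smoothed recursively in the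 same way, a contractible closed curve has value $-2$, and a closed curve enclosing $\star$ has value $\lambda_p$. In particular for two distinct pending arcs, $f(v_i,v_i)f(v_j,v_j)=f(v_i,v_j)^2+\lambda_pf(v_i,v_j)f(v_j,v_i)+f(v_j,v_i)^2$. The frieze is positive integral if all values lie in $\mathbb{Z}_{>0}$. *)

theory Defs
  imports Complex_Main
begin

definition lambda_p :: "nat \<Rightarrow> real" where
  "lambda_p p = 2 * cos (pi / real p)"

text \<open>Arcs of P_n^star are encoded as pairs (i,d) with i < n and 1 \<le> d \<le> n:
  the arc from v_i to v_((i+d) mod n) such that v_(i+1),...,v_(i+d-1) lie on the side
  not containing star.  d = 1 is the boundary segment (v_i,v_(i+1)); d = n is the
  pending arc (v_i,v_i); 1 < d < n are the other standard arcs.  In the lift to the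
  universal cover of the (punctured) disk, i.e. a strip with vertices at the integers
  and deck translation by n, the arc (i,d) lifts to the intervals [a, a+d] with
  a = i mod n.\<close>
definition orb_arcs :: "nat \<Rightarrow> (nat \<times> nat) set" where
  "orb_arcs n = {(i, d). i < n \<and> 1 \<le> d \<and> d \<le> n}"

definition is_boundary_seg :: "nat \<times> nat \<Rightarrow> bool" where
  "is_boundary_seg \<tau> \<longleftrightarrow> snd \<tau> = 1"

definition lift_arc :: "nat \<Rightarrow> int \<Rightarrow> nat \<Rightarrow> nat \<times> nat" where
  "lift_arc n a L = (nat (a mod int n), L)"

text \<open>Value of the (possibly self-crossing) curve whose lift is the interval [a,b],
  0 < b - a < 2n.  For n < b - a = n + m < 2n the curve
  has exactly one self-crossing; smoothing it gives (closed curve around star) times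
  the arc [a, a+m], plus the arc [a+m-n, a] (= arc [a+m, a+n]).\<close>
definition curve_val :: "nat \<Rightarrow> real \<Rightarrow> (nat \<times> nat \<Rightarrow> real) \<Rightarrow> int \<Rightarrow> int \<Rightarrow> real" where
  "curve_val n lam f a b =
     (if b - a \<le> int n then f (lift_arc n a (nat (b - a)))
      else lam * f (lift_arc n a (nat (b - a - int n)))
           + f (lift_arc n (b - int n) (nat (2 * int n - (b - a)))))"

definition crosses :: "nat \<Rightarrow> nat \<times> nat \<Rightarrow> nat \<times> nat \<Rightarrow> bool" where
  "crosses n \<tau> \<sigma> \<longleftrightarrow> (\<exists>t::int.
     let a = int (fst \<tau>); b = a + int (snd \<tau>);
         c = int (fst \<sigma>) + t * int n; d = c + int (snd \<sigma>)
     in (a < c \<and> c < b \<and> b < d) \<or> (c < a \<and> a < d \<and> d < b))"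

text \<open>Frieze on P_n^star (orbifold point of order p), real valued: boundary segments
  have value 1, and for every crossing point of two arcs (i.e. every strictly
  interleaving pair of lifts a < c < a+L1 < c+L2) the skein relation holds:
  the two smoothings give [a,c] u [a+L1, c+L2] and [a, c+L2] u [c, a+L1].\<close>
definition is_frieze :: "nat \<Rightarrow> nat \<Rightarrow> (nat \<times> nat \<Rightarrow> real) \<Rightarrow> bool" where
  "is_frieze p n f \<longleftrightarrow>
     (\<forall>i<n. f (i, 1) = 1) \<and>
     (\<forall>(a::int) (c::int) (L1::nat) (L2::nat).
        1 \<le> L1 \<longrightarrow> L1 \<le> n \<longrightarrow> 1 \<le> L2 \<longrightarrow> L2 \<le> n \<longrightarrow>
        a < c \<longrightarrow> c < a + int L1 \<longrightarrow> a + int L1 < c + int L2 \<longrightarrow>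
        f (lift_arc n a L1) * f (lift_arc n c L2) =
          curve_val n (lambda_p p) f a c * curve_val n (lambda_p p) f (a + int L1) (c + int L2)
        + curve_val n (lambda_p p) f a (c + int L2) * curve_val n (lambda_p p) f c (a + int L1))"

definition positive_integral_frieze :: "nat \<Rightarrow> nat \<Rightarrow> (nat \<times> nat \<Rightarrow> real) \<Rightarrow> bool" where
  "positive_integral_frieze p n f \<longleftrightarrow>
     is_frieze p n f \<and> (\<forall>\<tau>\<in>orb_arcs n. f \<tau> \<in> \<int> \<and> f \<tau> > 0)"

text \<open>Triangulation: maximal set of pairwise non-crossing arcs that are not boundary
  segments (images of rotation-invariant diagonal sets of P_pn).\<close>
definition is_triangulation :: "nat \<Rightarrow> (nat \<times> nat) set \<Rightarrow> bool" where
  "is_triangulation n T \<longleftrightarrow>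
     T \<subseteq> {\<tau> \<in> orb_arcs n. \<not> is_boundary_seg \<tau>} \<and>
     (\<forall>\<tau>\<in>T. \<forall>\<sigma>\<in>T. \<not> crosses n \<tau> \<sigma>) \<and>
     (\<forall>\<sigma>\<in>orb_arcs n. \<not> is_boundary_seg \<sigma> \<longrightarrow> \<sigma> \<notin> T \<longrightarrow> (\<exists>\<tau>\<in>T. crosses n \<tau> \<sigma>))"

end

theory Submission
  imports Defs
begin


lemma lam3: "lambda_p 3 = 1"
  by (simp add: lambda_p_def cos_60)

locale ofr =
  fixes n :: nat and f :: "nat \<times> nat \<Rightarrow> real"
  assumes n1: "n \<ge> 1" and pif: "positive_integral_frieze 3 n f"
begin

definition F :: "int \<Rightarrow> int \<Rightarrow> real" where
  "F x y = f (lift_arc n x (nat (y - x)))"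

definition cv :: "int \<Rightarrow> int \<Rightarrow> real" where
  "cv x y = (if y - x \<le> int n then F x y else F x (y - int n) + F (y - int n) (x + int n))"

lemma cv_curve: "curve_val n (lambda_p 3) f x y = cv x y"
proof -
  have "nat (2 * int n - (y - x)) = nat (x + int n - (y - int n))" by (simp add: algebra_simps)
  moreover have "nat (y - x - int n) = nat (y - int n - x)" by (simp add: algebra_simps)
  ultimately show ?thesis unfolding curve_val_def cv_def F_def lam3 by simp
qed

lemma F_shift: "F (x + k * int n) (y + k * int n) = F x y"
  unfolding F_def lift_arc_def by simp

lemma F_shift1: "F (x + int n) (y + int n) = F x y"
  using F_shift[of x 1 y] by simp

lemma F_pos: assumes "1 \<le> y - x" "y - x \<le> int n"
  shows "F x y \<ge> 1 \<and> F x y \<in> \<int>"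
proof -
  have "x mod int n < int n" "0 \<le> x mod int n" using n1 by auto
  then have "nat (x mod int n) < n" by linarith
  then have mem: "(nat (x mod int n), nat (y - x)) \<in> orb_arcs n"
    using assms unfolding orb_arcs_def by auto
  have "F x y \<in> \<int>" "F x y > 0" using pif mem unfolding positive_integral_frieze_def F_def lift_arc_def
    by auto
  then obtain k where k: "F x y = of_int k" "k > 0" by (metis Ints_cases of_int_0_less_iff)
  then show ?thesis by (simp add: \<open>F x y \<in> \<int>\<close>)
qed

lemma F_bd: "F x (x + 1) = 1"
proof -
  have "x mod int n < int n" "0 \<le> x mod int n" using n1 by auto
  then have "nat (x mod int n) < n" by linarith
  then show ?thesis using pif unfolding positive_integral_frieze_def is_frieze_def F_def lift_arc_def
    by auto
qed

lemma SK: assumes "a < c" "c < b" "b < d" "b - a \<le> int n" "d - c \<le> int n"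
  shows "F a b * F c d = cv a c * cv b d + cv a d * cv c b"
proof -
  have fr: "is_frieze 3 n f" using pif unfolding positive_integral_frieze_def by auto
  define L1 where "L1 = nat (b - a)"
  define L2 where "L2 = nat (d - c)"
  have h: "1 \<le> L1" "L1 \<le> n" "1 \<le> L2" "L2 \<le> n" "a + int L1 = b" "c + int L2 = d"
    using assms unfolding L1_def L2_def by auto
  have "f (lift_arc n a L1) * f (lift_arc n c L2) =
          curve_val n (lambda_p 3) f a c * curve_val n (lambda_p 3) f (a + int L1) (c + int L2)
        + curve_val n (lambda_p 3) f a (c + int L2) * curve_val n (lambda_p 3) f c (a + int L1)"
    using fr h assms unfolding is_frieze_def by blast
  moreover have "F a b = f (lift_arc n a L1)" "F c d = f (lift_arc n c L2)"
    unfolding F_def L1_def L2_def by auto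
  ultimately show ?thesis unfolding cv_curve h(5,6) by simp
qed

lemma cv_ge1: assumes "x < y" "y - x < 2 * int n" shows "cv x y \<ge> 1"
proof (cases "y - x \<le> int n")
  case True
  have "1 \<le> y - x" using assms by simp
  then have "F x y \<ge> 1" using F_pos[where x=x and y=y] True by blast
  then show ?thesis using True unfolding cv_def by simp
next
  case False
  then have "F x (y - int n) \<ge> 1" "F (y - int n) (x + int n) \<ge> 1"
    using F_pos[where x=x and y="y - int n"] F_pos[where x="y - int n" and y="x + int n"] assms by auto
  then show ?thesis using False unfolding cv_def by auto
qed

end


context ofr
begin

definition act :: "nat set \<Rightarrow> int \<Rightarrow> bool" where
  "act S z \<longleftrightarrow> nat (z mod int n) \<in> S"

definition cons :: "nat set \<Rightarrow> int \<Rightarrow> int \<Rightarrow> bool" where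
  "cons S x y \<longleftrightarrow> x < y \<and> act S x \<and> act S y \<and> (\<forall>z. x < z \<and> z < y \<longrightarrow> \<not> act S z)"

lemma act_shift: "act S (z + k * int n) = act S z"
  unfolding act_def by simp

lemma act_shift1: "act S (z + int n) = act S z"
  using act_shift[of S z 1] by simp

lemma act_shift_m1: "act S (z - int n) = act S z"
  using act_shift[of S z "-1"] by simp

lemma cons_shift: "cons S (x + k * int n) (y + k * int n) = cons S x y"
proof
  assume c: "cons S (x + k * int n) (y + k * int n)"
  show "cons S x y" unfolding cons_def
  proof (intro conjI allI impI)
    show "x < y" using c unfolding cons_def by simp
    show "act S x" "act S y" using c act_shift unfolding cons_def by auto
    fix z assume "x < z \<and> z < y"
    then have "\<not> act S (z + k * int n)" using c unfolding cons_def by auto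
    then show "\<not> act S z" using act_shift by simp
  qed
next
  assume c: "cons S x y"
  show "cons S (x + k * int n) (y + k * int n)" unfolding cons_def
  proof (intro conjI allI impI)
    show "x + k * int n < y + k * int n" using c unfolding cons_def by simp
    show "act S (x + k * int n)" "act S (y + k * int n)" using c act_shift unfolding cons_def by auto
    fix z assume "x + k * int n < z \<and> z < y + k * int n"
    then have "\<not> act S (z + (- k) * int n)" using c unfolding cons_def by auto
    then show "\<not> act S z" using act_shift[of S z "-k"] by simp
  qed
qed

lemma cons_shift1: "cons S (x + int n) (y + int n) = cons S x y"
  using cons_shift[of S x 1 y] by simp

lemma cons_le_next: "cons S x q \<Longrightarrow> act S z \<Longrightarrow> x < z \<Longrightarrow> q \<le> z"
  unfolding cons_def by force

lemma cons_le_prev: "cons S p y \<Longrightarrow> act S z \<Longrightarrow> z < y \<Longrightarrow> z \<le> p"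
  unfolding cons_def by force

lemma exists_next: assumes "act S x" shows "\<exists>q. cons S x q \<and> q \<le> x + int n"
proof -
  define A where "A = {z. x < z \<and> z \<le> x + int n \<and> act S z}"
  have fin: "finite A" unfolding A_def by (rule finite_subset[of _ "{x<..x + int n}"]) auto
  have ne: "x + int n \<in> A" unfolding A_def using n1 act_shift1 assms by auto
  define q where "q = Min A"
  have qA: "q \<in> A" unfolding q_def using fin ne Min_in by blast
  have qmin: "\<And>z. z \<in> A \<Longrightarrow> q \<le> z" unfolding q_def using fin by simp
  have "cons S x q" unfolding cons_def
  proof (intro conjI allI impI)
    show "x < q" "act S q" using qA unfolding A_def by auto
    show "act S x" by fact
    fix z assume z: "x < z \<and> z < q"
    show "\<not> act S z"
    proof
      assume "act S z"
      then have "z \<in> A" using z qA unfolding A_def by auto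
      then show False using qmin z by force
    qed
  qed
  then show ?thesis using qA unfolding A_def by auto
qed

lemma exists_prev: assumes "act S y" shows "\<exists>p. cons S p y \<and> y - int n \<le> p"
proof -
  define A where "A = {z. y - int n \<le> z \<and> z < y \<and> act S z}"
  have fin: "finite A" unfolding A_def by (rule finite_subset[of _ "{y - int n..<y}"]) auto
  have ne: "y - int n \<in> A" unfolding A_def using n1 act_shift_m1 assms by auto
  define p where "p = Max A"
  have pA: "p \<in> A" unfolding p_def using fin ne Max_in by blast
  have pmax: "\<And>z. z \<in> A \<Longrightarrow> z \<le> p" unfolding p_def using fin by simp
  have "cons S p y" unfolding cons_def
  proof (intro conjI allI impI)
    show "p < y" "act S p" using pA unfolding A_def by auto
    show "act S y" by fact
    fix z assume z: "p < z \<and> z < y"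
    show "\<not> act S z"
    proof
      assume "act S z"
      then have "z \<in> A" using z pA unfolding A_def by auto
      then show False using pmax z by force
    qed
  qed
  then show ?thesis using pA unfolding A_def by auto
qed

lemma other_act: assumes "S \<subseteq> {..<n}" "2 \<le> card S"
  shows "\<exists>z. act S z \<and> x < z \<and> z < x + int n"
proof -
  define r where "r = nat (x mod int n)"
  have fin: "finite S" using assms(1) finite_subset by blast
  obtain s where s: "s \<in> S" "s \<noteq> r"
  proof -
    have "\<not> S \<subseteq> {r}" using assms(2) card_mono[OF _ , of "{r}" S] by fastforce
    then show ?thesis using that by blast
  qed
  have sn: "s < n" using s assms(1) by auto
  have r0: "0 \<le> x mod int n" "x mod int n < int n" using n1 by auto
  define D where "D = (x div int n) * int n"
  have xr: "x = D + int r" unfolding r_def D_def using r0 by simp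
  have sr: "int s \<noteq> int r" using s by simp
  define z where "z = (if int s > int r then D + int s else D + int s + int n)"
  have ri: "int r = x mod int n" unfolding r_def using r0 by simp
  have sn': "int s < int n" using sn by simp
  have zin: "x < z \<and> z < x + int n"
  proof (cases "int s > int r")
    case True then show ?thesis using xr sr sn' r0 ri unfolding z_def if_P[OF True] by linarith
  next
    case False then show ?thesis using xr sr sn' r0 ri unfolding z_def if_not_P[OF False] by linarith
  qed
  have "z mod int n = int s" unfolding z_def D_def using sn
    by (auto simp: mod_add_left_eq[symmetric])
  then have "act S z" unfolding act_def using s by simp
  then show ?thesis using zin by blast
qed

end


context ofr
begin

lemma cons_len: "cons S x y \<Longrightarrow> y - x \<le> int n"
  using cons_le_next[of S x y "x + int n"] act_shift1[of S x] n1 unfolding cons_def by auto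

lemma cons_F: "cons S x y \<Longrightarrow> (\<forall>x y. cons S x y \<longrightarrow> F x y = 1) \<Longrightarrow> F x y = 1"
  by blast

lemma mono_left:
  assumes bnd: "\<forall>x y. cons S x y \<longrightarrow> F x y = 1"
    and ear2: "\<forall>p y q. cons S p y \<longrightarrow> cons S y q \<longrightarrow> F p q \<ge> 2"
    and ax: "act S x"
  shows "nat (y - x) = m \<Longrightarrow> x < y \<Longrightarrow> y \<le> x + int n \<Longrightarrow> cons S p y \<Longrightarrow> x < p \<Longrightarrow> F x p + 1 \<le> F x y"
proof (induction m arbitrary: y p rule: less_induct)
  case (less m)
  have ap: "act S p" using less.prems(4) unfolding cons_def by auto
  obtain pp where pp: "cons S pp p" using exists_prev[OF ap] by blast
  have ppx: "x \<le> pp"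
  proof (rule ccontr)
    assume "\<not> x \<le> pp"
    then show False using pp ax less.prems(5) unfolding cons_def by auto
  qed
  have Fpy: "F p y = 1" using bnd less.prems(4) by blast
  have Fppp: "F pp p = 1" using bnd pp by blast
  have A2: "F pp y \<ge> 2" using ear2 pp less.prems(4) by blast
  show ?case
  proof (cases "pp = x")
    case True
    then show ?thesis using A2 Fppp by simp
  next
    case False
    then have xpp: "x < pp" using ppx by simp
    have ppp: "pp < p" using pp unfolding cons_def by simp
    have py: "p < y" using less.prems(4) unfolding cons_def by simp
    have lt: "nat (p - x) < m" using less.prems(1) xpp ppp py by linarith
    have IH: "F x pp + 1 \<le> F x p"
      by (rule less.IH[OF lt refl]) (use less.prems xpp ppp py pp in auto)
    have sk: "F x p * F pp y = cv x pp * cv p y + cv x y * cv pp p"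
      by (rule SK) (use xpp ppp py less.prems in auto)
    have "cv x pp = F x pp" "cv p y = 1" "cv x y = F x y" "cv pp p = 1"
      using less.prems xpp ppp py Fpy Fppp unfolding cv_def by auto
    then have eq: "F x p * F pp y = F x pp + F x y" using sk by simp
    have pos: "F x p \<ge> 1" using F_pos[where x=x and y=p] xpp ppp py less.prems by auto
    have "F x p * 2 \<le> F x p * F pp y" using A2 pos by (intro mult_left_mono) auto
    then show ?thesis using eq IH by linarith
  qed
qed

lemma mono_right:
  assumes bnd: "\<forall>x y. cons S x y \<longrightarrow> F x y = 1"
    and ear2: "\<forall>p y q. cons S p y \<longrightarrow> cons S y q \<longrightarrow> F p q \<ge> 2"
    and az: "act S z"
  shows "nat (z - y) = m \<Longrightarrow> y < z \<Longrightarrow> z - int n \<le> y \<Longrightarrow> cons S y q \<Longrightarrow> q < z \<Longrightarrow> F q z + 1 \<le> F y z"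
proof (induction m arbitrary: y q rule: less_induct)
  case (less m)
  have aq: "act S q" using less.prems(4) unfolding cons_def by auto
  obtain qq where qq: "cons S q qq" using exists_next[OF aq] by blast
  have qqz: "qq \<le> z"
  proof (rule ccontr)
    assume "\<not> qq \<le> z"
    then show False using qq az less.prems(5) unfolding cons_def by auto
  qed
  have Fyq: "F y q = 1" using bnd less.prems(4) by blast
  have Fqqq: "F q qq = 1" using bnd qq by blast
  have A2: "F y qq \<ge> 2" using ear2 qq less.prems(4) by blast
  show ?case
  proof (cases "qq = z")
    case True
    then show ?thesis using A2 Fqqq by simp
  next
    case False
    then have qqz': "qq < z" using qqz by simp
    have yq: "y < q" using less.prems(4) unfolding cons_def by simp
    have qqq: "q < qq" using qq unfolding cons_def by simp
    have lt: "nat (z - q) < m" using less.prems(1) yq qqq qqz' by linarith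
    have IH: "F qq z + 1 \<le> F q z"
      by (rule less.IH[OF lt refl]) (use less.prems qqz' qq yq qqq in auto)
    have sk: "F y qq * F q z = cv y q * cv qq z + cv y z * cv q qq"
      by (rule SK) (use yq qqq qqz' less.prems in auto)
    have "cv y q = 1" "cv qq z = F qq z" "cv y z = F y z" "cv q qq = 1"
      using less.prems yq qqq qqz' Fyq Fqqq unfolding cv_def by auto
    then have eq: "F y qq * F q z = F qq z + F y z" using sk by simp
    have pos: "F q z \<ge> 1" using F_pos[where x=q and y=z] yq qqq qqz' less.prems by auto
    have "2 * F q z \<le> F y qq * F q z" using A2 pos by (intro mult_right_mono) auto
    then show ?thesis using eq IH by linarith
  qed
qed

lemma ear_exists:
  assumes S: "S \<subseteq> {..<n}" "2 \<le> card S"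
    and bnd: "\<forall>x y. cons S x y \<longrightarrow> F x y = 1"
  shows "\<exists>p y q. cons S p y \<and> cons S y q \<and> F p q = 1"
proof (rule ccontr)
  assume nex: "\<not> ?thesis"
  have ear2: "\<forall>p y q. cons S p y \<longrightarrow> cons S y q \<longrightarrow> F p q \<ge> 2"
  proof (intro allI impI)
    fix p y q assume c1: "cons S p y" and c2: "cons S y q"
    have ay: "act S y" using c1 unfolding cons_def by simp
    obtain z where z: "act S z" "y - int n < z" "z < y" using other_act[OF S, of "y - int n"] by auto
    have "z \<le> p" using cons_le_prev[OF c1 z(1,3)] .
    moreover have "act S (p + int n)" using c1 act_shift1 unfolding cons_def by auto
    ultimately have "q \<le> p + int n" using cons_le_next[OF c2, of "p + int n"] z by linarith
    moreover have "p < q" using c1 c2 unfolding cons_def by simp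
    ultimately obtain k where k: "F p q = of_int k" "1 \<le> F p q"
      using F_pos[where x=p and y=q] by (auto elim!: Ints_cases)
    have "F p q \<noteq> 1" using nex c1 c2 by blast
    then have "k \<noteq> 1" "1 \<le> k" using k by auto
    then have "2 \<le> k" by simp
    then show "F p q \<ge> 2" using k by simp
  qed
  obtain s where s: "s \<in> S" using S(2) by fastforce
  define x where "x = int s"
  have ax: "act S x" unfolding act_def x_def using s S(1) by auto
  obtain y1 where y1: "cons S x y1" using exists_next[OF ax] by blast
  obtain z1 where z1: "act S z1" "x < z1" "z1 < x + int n" using other_act[OF S, of x] by auto
  have y1z: "y1 \<le> z1" using cons_le_next[OF y1 z1(1,2)] .
  have axn: "act S (x + int n)" using ax act_shift1 by simp
  obtain w where w: "cons S w (x + int n)" using exists_prev[OF axn] by blast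
  have z1w: "z1 \<le> w" using cons_le_prev[OF w z1(1,3)] .
  have xy1: "x < y1" using y1 unfolding cons_def by simp
  have aw: "act S w" using w unfolding cons_def by simp
  have y1w: "y1 \<le> w" using cons_le_next[OF y1 aw] z1 z1w by linarith
  have wxn: "w < x + int n" using w unfolding cons_def by simp
  have P1: "F x w + 1 \<le> F x (x + int n)"
    using mono_left[OF bnd ear2 ax refl, of "x + int n" w] w z1 z1w n1 by simp
  have P2: "F y1 (x + int n) + 1 \<le> F x (x + int n)"
    using mono_right[OF bnd ear2 axn refl, of x y1] y1 y1z z1 n1 by simp
  have sk: "F x (x + int n) * F w (y1 + int n) = cv x w * cv (x + int n) (y1 + int n) + cv x (y1 + int n) * cv w (x + int n)"
    by (rule SK) (use z1 z1w wxn xy1 y1w in auto)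
  have Fxy1: "F x y1 = 1" using bnd y1 by blast
  have Fw: "F w (x + int n) = 1" using bnd w by blast
  have c3: "cons S (x + int n) (y1 + int n)" using cons_shift1 y1 by simp
  have A2: "F w (y1 + int n) \<ge> 2" using ear2 w c3 by blast
  have "cv x w = F x w" using z1 z1w wxn unfolding cv_def by auto
  moreover have "cv (x + int n) (y1 + int n) = 1" using Fxy1 F_shift1[of x y1] xy1 cons_len[OF y1] unfolding cv_def by simp
  moreover have "cv x (y1 + int n) = 1 + F y1 (x + int n)" using Fxy1 xy1 unfolding cv_def by simp
  moreover have "cv w (x + int n) = 1" using Fw wxn z1 z1w unfolding cv_def by auto
  ultimately have eq: "F x (x + int n) * F w (y1 + int n) = F x w + 1 + F y1 (x + int n)" using sk by simp
  have pos: "F x (x + int n) \<ge> 1" using F_pos[where x=x and y="x + int n"] n1 by simp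
  have "F x (x + int n) * 2 \<le> F x (x + int n) * F w (y1 + int n)" using A2 pos by (intro mult_left_mono) auto
  then show False using eq P1 P2 by linarith
qed

end


definition lo :: "nat \<times> nat \<Rightarrow> int" where "lo \<tau> = int (fst \<tau>)"
definition hi :: "nat \<times> nat \<Rightarrow> int" where "hi \<tau> = int (fst \<tau>) + int (snd \<tau>)"

lemma crosses_iff: "crosses n \<tau> \<sigma> \<longleftrightarrow> (\<exists>t::int.
   (lo \<tau> < lo \<sigma> + t * int n \<and> lo \<sigma> + t * int n < hi \<tau> \<and> hi \<tau> < hi \<sigma> + t * int n) \<or>
   (lo \<sigma> + t * int n < lo \<tau> \<and> lo \<tau> < hi \<sigma> + t * int n \<and> hi \<sigma> + t * int n < hi \<tau>))"
  unfolding crosses_def Let_def lo_def hi_def by (simp add: algebra_simps)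

lemma prod_ge1: "(1::real) \<le> x \<Longrightarrow> 1 \<le> y \<Longrightarrow> 1 \<le> x * y"
  using mult_mono[of 1 x 1 y] by simp

lemma mod_neq: "a < b \<Longrightarrow> b < a + int n \<Longrightarrow> a mod int n \<noteq> b mod int n"
proof
  assume ab: "a < b" "b < a + int n" and m: "a mod int n = b mod int n"
  then have "int n dvd (a - b)" by (simp add: mod_eq_dvd_iff)
  then have "int n dvd (b - a)" using dvd_minus_iff minus_diff_eq by metis
  then have "int n \<le> b - a" using ab zdvd_imp_le by auto
  then show False using ab by simp
qed

context ofr
begin

lemma f_F: "\<tau> \<in> orb_arcs n \<Longrightarrow> f \<tau> = F (lo \<tau>) (hi \<tau>)"
  unfolding F_def lift_arc_def lo_def hi_def orb_arcs_def by (cases \<tau>) auto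

lemma lo_hi: "\<tau> \<in> orb_arcs n \<Longrightarrow> 0 \<le> lo \<tau> \<and> lo \<tau> < int n \<and> lo \<tau> < hi \<tau> \<and> hi \<tau> - lo \<tau> \<le> int n"
  unfolding lo_def hi_def orb_arcs_def by (cases \<tau>) auto

lemma cross_ge2: assumes "\<tau> \<in> orb_arcs n" "\<sigma> \<in> orb_arcs n" "crosses n \<tau> \<sigma>"
  shows "f \<tau> * f \<sigma> \<ge> 2"
proof -
  obtain t where t: "(lo \<tau> < lo \<sigma> + t * int n \<and> lo \<sigma> + t * int n < hi \<tau> \<and> hi \<tau> < hi \<sigma> + t * int n) \<or>
   (lo \<sigma> + t * int n < lo \<tau> \<and> lo \<tau> < hi \<sigma> + t * int n \<and> hi \<sigma> + t * int n < hi \<tau>)"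
    using assms(3) crosses_iff by blast
  define a where "a = lo \<tau>"
  define b where "b = hi \<tau>"
  define c where "c = lo \<sigma> + t * int n"
  define d where "d = hi \<sigma> + t * int n"
  have ft: "f \<tau> = F a b" using f_F[OF assms(1)] a_def b_def by simp
  have fs: "f \<sigma> = F c d" using f_F[OF assms(2)] F_shift c_def d_def by simp
  have l1: "b - a \<le> int n" "a < b" using lo_hi[OF assms(1)] a_def b_def by auto
  have l2: "d - c \<le> int n" "c < d" using lo_hi[OF assms(2)] c_def d_def by auto
  have t': "(a < c \<and> c < b \<and> b < d) \<or> (c < a \<and> a < d \<and> d < b)" using t a_def b_def c_def d_def by simp
  then show ?thesis
  proof
    assume h: "a < c \<and> c < b \<and> b < d"
    have sk: "F a b * F c d = cv a c * cv b d + cv a d * cv c b" using SK h l1 l2 by auto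
    have "cv a c \<ge> 1" "cv b d \<ge> 1" "cv a d \<ge> 1" "cv c b \<ge> 1"
      using cv_ge1 h l1 l2 by auto
    then have "cv a c * cv b d \<ge> 1" "cv a d * cv c b \<ge> 1" using prod_ge1 by auto
    moreover have "f \<tau> * f \<sigma> = F a b * F c d" using ft fs by simp
    ultimately show ?thesis using sk by linarith
  next
    assume h: "c < a \<and> a < d \<and> d < b"
    have sk: "F c d * F a b = cv c a * cv d b + cv c b * cv a d" using SK h l1 l2 by auto
    have "cv c a \<ge> 1" "cv d b \<ge> 1" "cv c b \<ge> 1" "cv a d \<ge> 1"
      using cv_ge1 h l1 l2 by auto
    then have "cv c a * cv d b \<ge> 1" "cv c b * cv a d \<ge> 1" using prod_ge1 by auto
    then show ?thesis using sk ft fs by (simp add: mult.commute)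
  qed
qed

definition sarc :: "nat set \<Rightarrow> nat \<times> nat \<Rightarrow> bool" where
  "sarc S \<tau> \<longleftrightarrow> \<tau> \<in> orb_arcs n \<and> act S (lo \<tau>) \<and> act S (hi \<tau>)"

definition good :: "nat set \<Rightarrow> (nat \<times> nat) set \<Rightarrow> bool" where
  "good S T \<longleftrightarrow> (\<forall>\<tau>\<in>T. sarc S \<tau> \<and> \<not> cons S (lo \<tau>) (hi \<tau>) \<and> f \<tau> = 1) \<and>
     (\<forall>\<tau>\<in>T. \<forall>\<sigma>\<in>T. \<not> crosses n \<tau> \<sigma>) \<and>
     (\<forall>\<sigma>. sarc S \<sigma> \<longrightarrow> \<not> cons S (lo \<sigma>) (hi \<sigma>) \<longrightarrow> \<sigma> \<notin> T \<longrightarrow> (\<exists>\<tau>\<in>T. crosses n \<tau> \<sigma>))"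

lemma bnd_int:
  assumes h: "\<forall>\<tau>. sarc S \<tau> \<longrightarrow> cons S (lo \<tau>) (hi \<tau>) \<longrightarrow> f \<tau> = 1" and c: "cons S x y"
  shows "F x y = 1"
proof -
  define j where "j = x div int n"
  define x0 where "x0 = x + (- j) * int n"
  define y0 where "y0 = y + (- j) * int n"
  have x0m: "x0 = x mod int n" unfolding x0_def j_def by (simp add: minus_div_mult_eq_mod[symmetric] algebra_simps)
  have r0: "0 \<le> x0" "x0 < int n" using n1 x0m by auto
  have c0: "cons S x0 y0" using cons_shift[of S x "-j" y] c unfolding x0_def y0_def by simp
  have len: "y0 - x0 \<le> int n" "x0 < y0" using cons_len[OF c0] c0 unfolding cons_def by auto
  define \<tau> where "\<tau> = (nat x0, nat (y0 - x0))"
  have lh: "lo \<tau> = x0" "hi \<tau> = y0" unfolding \<tau>_def lo_def hi_def using r0 len by auto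
  have mem: "\<tau> \<in> orb_arcs n" unfolding \<tau>_def orb_arcs_def using r0 len by auto
  have "sarc S \<tau>" unfolding sarc_def lh using mem c0 unfolding cons_def by auto
  moreover have "cons S (lo \<tau>) (hi \<tau>)" using c0 lh by simp
  ultimately have "f \<tau> = 1" using h by blast
  moreover have "f \<tau> = F x0 y0" using f_F[OF mem] lh by simp
  moreover have "F x0 y0 = F x y" unfolding x0_def y0_def by (rule F_shift)
  ultimately show ?thesis by simp
qed

end


context ofr
begin

lemma act_sub: "act (S - {r}) z \<longleftrightarrow> act S z \<and> nat (z mod int n) \<noteq> r"
  unfolding act_def by auto

lemma same_res: "nat (a mod int n) = nat (b mod int n) \<Longrightarrow> a mod int n = b mod int n"
proof -
  assume "nat (a mod int n) = nat (b mod int n)"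
  moreover have "0 \<le> a mod int n" "0 \<le> b mod int n" using n1 by auto
  ultimately show ?thesis by linarith
qed

lemma res_shift: "a mod int n = b mod int n \<Longrightarrow> \<exists>k. a = b + k * int n"
proof -
  assume "a mod int n = b mod int n"
  then have "int n dvd (a - b)" by (simp add: mod_eq_dvd_iff)
  then obtain k where "a - b = int n * k" by (auto elim: dvdE)
  then show ?thesis by (intro exI[of _ k]) (simp add: algebra_simps)
qed

lemma base_case:
  assumes "S = {s}" "sarc S \<sigma>" shows "cons S (lo \<sigma>) (hi \<sigma>)"
proof -
  have lh: "0 \<le> lo \<sigma>" "lo \<sigma> < int n" "lo \<sigma> < hi \<sigma>" "hi \<sigma> - lo \<sigma> \<le> int n"
    using lo_hi assms(2) unfolding sarc_def by auto
  have al: "act S (lo \<sigma>)" "act S (hi \<sigma>)" using assms(2) unfolding sarc_def by auto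
  then have eqr: "lo \<sigma> mod int n = hi \<sigma> mod int n" using same_res assms(1) unfolding act_def by auto
  have hn: "hi \<sigma> = lo \<sigma> + int n"
  proof (rule ccontr)
    assume "hi \<sigma> \<noteq> lo \<sigma> + int n"
    then have "hi \<sigma> < lo \<sigma> + int n" using lh by simp
    then show False using mod_neq[of "lo \<sigma>" "hi \<sigma>" n] lh eqr by blast
  qed
  show ?thesis unfolding cons_def
  proof (intro conjI allI impI)
    show "lo \<sigma> < hi \<sigma>" using lh by simp
    show "act S (lo \<sigma>)" "act S (hi \<sigma>)" using al by auto
    fix z assume z: "lo \<sigma> < z \<and> z < hi \<sigma>"
    show "\<not> act S z"
    proof
      assume "act S z"
      then have "z mod int n = lo \<sigma> mod int n" using same_res assms(1) al unfolding act_def by auto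
      then show False using mod_neq[of "lo \<sigma>" z n] z hn by auto
    qed
  qed
qed

lemma cons_sub: "cons S x y \<Longrightarrow> act (S - {r}) x \<Longrightarrow> act (S - {r}) y \<Longrightarrow> cons (S - {r}) x y"
  unfolding cons_def act_sub by auto

lemma main:
  "card S = m \<Longrightarrow> S \<subseteq> {..<n} \<Longrightarrow> S \<noteq> {} \<Longrightarrow>
   (\<forall>\<tau>. sarc S \<tau> \<longrightarrow> cons S (lo \<tau>) (hi \<tau>) \<longrightarrow> f \<tau> = 1) \<Longrightarrow> \<exists>T. good S T"
proof (induction m arbitrary: S rule: less_induct)
  case (less m)
  have finS: "finite S" using less.prems(2) finite_subset by blast
  have m1: "1 \<le> m" using less.prems finS card_0_eq by fastforce
  show ?case
  proof (cases "m = 1")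
    case True
    then obtain s where s: "S = {s}" using less.prems(1) card_1_singletonE by blast
    have "good S {}" unfolding good_def using base_case[OF s] by auto
    then show ?thesis by blast
  next
    case False
    then have m2: "2 \<le> card S" using m1 less.prems(1) by simp
    have bnd: "\<forall>x y. cons S x y \<longrightarrow> F x y = 1" using bnd_int[OF less.prems(4)] by blast
    obtain p0 y0 q0 where e0: "cons S p0 y0" "cons S y0 q0" "F p0 q0 = 1"
      using ear_exists[OF less.prems(2) m2 bnd] by blast
    define j where "j = p0 div int n"
    define p where "p = p0 + (- j) * int n"
    define y where "y = y0 + (- j) * int n"
    define q where "q = q0 + (- j) * int n"
    have pm: "p = p0 mod int n" unfolding p_def j_def by (simp add: minus_div_mult_eq_mod[symmetric] algebra_simps)
    have p0n: "0 \<le> p" "p < int n" using n1 pm by auto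
    have py: "cons S p y" using cons_shift[of S p0 "-j" y0] e0(1) unfolding p_def y_def by simp
    have yq: "cons S y q" using cons_shift[of S y0 "-j" q0] e0(2) unfolding q_def y_def by simp
    have Fpq: "F p q = 1" using e0(3) F_shift[of p0 "-j" q0] unfolding p_def q_def by simp
    have ay: "act S y" using py unfolding cons_def by simp
    obtain z where z: "act S z" "y - int n < z" "z < y" using other_act[OF less.prems(2) m2, of "y - int n"] by auto
    have zp: "z \<le> p" using cons_le_prev[OF py z(1,3)] .
    obtain z' where z': "act S z'" "y < z'" "z' < y + int n" using other_act[OF less.prems(2) m2, of y] by auto
    have qz: "q \<le> z'" using cons_le_next[OF yq z'(1,2)] .
    have ord: "p < y" "y < q" "y - int n < p" "q < y + int n" using py yq z zp z' qz unfolding cons_def by auto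
    define r where "r = nat (y mod int n)"
    define S' where "S' = S - {r}"
    have actS': "\<And>w. act S' w \<longleftrightarrow> act S w \<and> w mod int n \<noteq> y mod int n"
      unfolding S'_def act_sub r_def using same_res by auto
    have between: "\<And>w k. act S w \<Longrightarrow> p + k * int n < w \<Longrightarrow> w < q + k * int n \<Longrightarrow> w = y + k * int n"
    proof -
      fix w k assume w: "act S w" "p + k * int n < w" "w < q + k * int n"
      have aw: "act S (w + (-k) * int n)" using w(1) act_shift[of S w "-k"] by simp
      have "\<not> (w + (-k) * int n < y)" using py aw w(2) unfolding cons_def by auto
      moreover have "\<not> (w + (-k) * int n > y)" using yq aw w(3) unfolding cons_def by auto
      ultimately show "w = y + k * int n" by auto
    qed
    have between_res: "\<And>w k. act S w \<Longrightarrow> p + k * int n < w \<Longrightarrow> w < q + k * int n \<Longrightarrow> \<not> act S' w"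
    proof -
      fix w k assume "act S w" "p + k * int n < w" "w < q + k * int n"
      then have "w = y + k * int n" using between by blast
      then show "\<not> act S' w" using actS' by simp
    qed
    have pS': "act S' p" using actS' mod_neq[of p y n] ord py unfolding cons_def by auto
    have qS': "act S' q" using actS' mod_neq[of y q n] ord yq unfolding cons_def by auto
    have S'sub: "S' \<subseteq> {..<n}" using less.prems(2) unfolding S'_def by auto
    have rS: "r \<in> S" using ay unfolding act_def r_def by simp
    have cardS': "card S' = m - 1" unfolding S'_def using rS finS less.prems(1) by simp
    have S'ne: "S' \<noteq> {}" using cardS' m2 less.prems(1) by auto
    have gap: "\<And>a b. act S' a \<Longrightarrow> act S' b \<Longrightarrow> cons S' a b \<Longrightarrow> \<not> cons S a b \<Longrightarrow>
        \<exists>k. a = p + k * int n \<and> b = q + k * int n"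
    proof -
      fix a b assume h: "act S' a" "act S' b" "cons S' a b" "\<not> cons S a b"
      have aS: "act S a" "act S b" "a < b" using h actS' unfolding cons_def by auto
      obtain w where w: "a < w" "w < b" "act S w" using h(4) aS unfolding cons_def by auto
      have "\<not> act S' w" using h(3) w unfolding cons_def by auto
      then have "w mod int n = y mod int n" using actS' w by auto
      then obtain k where k: "w = y + k * int n" using res_shift by blast
      have c1: "cons S (p + k * int n) w" using cons_shift py k by simp
      have c2: "cons S w (q + k * int n)" using cons_shift yq k by simp
      have "a \<le> p + k * int n" using cons_le_prev[OF c1 aS(1) w(1)] .
      moreover have "\<not> a < p + k * int n"
      proof
        assume lt: "a < p + k * int n"
        have "act S (p + k * int n)" using c1 unfolding cons_def by simp
        moreover have "act S' (p + k * int n)" using pS' act_shift actS' by simp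
        ultimately show False using h(3) lt c1 w unfolding cons_def by auto
      qed
      moreover have "q + k * int n \<le> b" using cons_le_next[OF c2 aS(2) w(2)] .
      moreover have "\<not> q + k * int n < b"
      proof
        assume lt: "q + k * int n < b"
        have "act S (q + k * int n)" using c2 unfolding cons_def by simp
        moreover have "act S' (q + k * int n)" using qS' act_shift actS' by simp
        ultimately show False using h(3) lt c2 w unfolding cons_def by auto
      qed
      ultimately show "\<exists>k. a = p + k * int n \<and> b = q + k * int n" by auto
    qed
    have hypS': "\<forall>\<tau>. sarc S' \<tau> \<longrightarrow> cons S' (lo \<tau>) (hi \<tau>) \<longrightarrow> f \<tau> = 1"
    proof (intro allI impI)
      fix \<tau> assume s': "sarc S' \<tau>" and c': "cons S' (lo \<tau>) (hi \<tau>)"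
      have mem: "\<tau> \<in> orb_arcs n" and a': "act S' (lo \<tau>)" "act S' (hi \<tau>)" using s' unfolding sarc_def by auto
      show "f \<tau> = 1"
      proof (cases "cons S (lo \<tau>) (hi \<tau>)")
        case True
        have "sarc S \<tau>" using mem a' actS' unfolding sarc_def by auto
        then show ?thesis using less.prems(4) True by blast
      next
        case False
        obtain k where k: "lo \<tau> = p + k * int n" "hi \<tau> = q + k * int n" using gap[OF a' c' False] by blast
        have "f \<tau> = F (lo \<tau>) (hi \<tau>)" using f_F[OF mem] .
        also have "\<dots> = F p q" using k F_shift by simp
        finally show ?thesis using Fpq by simp
      qed
    qed
    have lt: "m - 1 < m" using m1 by simp
    obtain T' where T': "good S' T'" using less.IH[OF lt cardS' S'sub S'ne hypS'] by blast
    define e where "e = (nat p, nat (q - p))"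
    have lhe: "lo e = p" "hi e = q" unfolding e_def lo_def hi_def using p0n ord by auto
    have qp: "q \<le> p + int n"
    proof -
      have "act S (p + int n)" using py act_shift1 unfolding cons_def by simp
      then show ?thesis using cons_le_next[OF yq, of "p + int n"] ord by linarith
    qed
    have emem: "e \<in> orb_arcs n" unfolding e_def orb_arcs_def using p0n ord qp by auto
    have fe: "f e = 1" using f_F[OF emem] lhe Fpq by simp
    have ncons_e: "\<not> cons S p q" using py yq unfolding cons_def by auto
    have sarc_e: "sarc S e" unfolding sarc_def lhe using emem py yq unfolding cons_def by auto
    have nocross: "\<And>\<tau>. act S' (lo \<tau>) \<Longrightarrow> act S' (hi \<tau>) \<Longrightarrow> lo \<tau> < hi \<tau> \<Longrightarrow> \<not> crosses n e \<tau> \<and> \<not> crosses n \<tau> e"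
    proof -
      fix \<tau> assume a: "act S' (lo \<tau>)" "act S' (hi \<tau>)" "lo \<tau> < hi \<tau>"
      have aS: "act S (lo \<tau>)" "act S (hi \<tau>)" using a actS' by auto
      have c1: "\<not> crosses n e \<tau>"
      proof
        assume "crosses n e \<tau>"
        then obtain t where t: "(p < lo \<tau> + t * int n \<and> lo \<tau> + t * int n < q \<and> q < hi \<tau> + t * int n) \<or>
          (lo \<tau> + t * int n < p \<and> p < hi \<tau> + t * int n \<and> hi \<tau> + t * int n < q)"
          unfolding crosses_iff lhe by blast
        then show False
        proof
          assume h: "p < lo \<tau> + t * int n \<and> lo \<tau> + t * int n < q \<and> q < hi \<tau> + t * int n"
          have "act S (lo \<tau> + t * int n)" using aS act_shift by simp
          then have "\<not> act S' (lo \<tau> + t * int n)" using between_res[of _ 0] h by simp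
          then show False using a act_shift actS' by simp
        next
          assume h: "lo \<tau> + t * int n < p \<and> p < hi \<tau> + t * int n \<and> hi \<tau> + t * int n < q"
          have "act S (hi \<tau> + t * int n)" using aS act_shift by simp
          then have "\<not> act S' (hi \<tau> + t * int n)" using between_res[of _ 0] h by simp
          then show False using a act_shift actS' by simp
        qed
      qed
      have c2: "\<not> crosses n \<tau> e"
      proof
        assume "crosses n \<tau> e"
        then obtain t where t: "(lo \<tau> < p + t * int n \<and> p + t * int n < hi \<tau> \<and> hi \<tau> < q + t * int n) \<or>
          (p + t * int n < lo \<tau> \<and> lo \<tau> < q + t * int n \<and> q + t * int n < hi \<tau>)"
          unfolding crosses_iff lhe by blast
        then show False
        proof
          assume h: "lo \<tau> < p + t * int n \<and> p + t * int n < hi \<tau> \<and> hi \<tau> < q + t * int n"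
          then have "\<not> act S' (hi \<tau>)" using between_res[of "hi \<tau>" t] aS by simp
          then show False using a by simp
        next
          assume h: "p + t * int n < lo \<tau> \<and> lo \<tau> < q + t * int n \<and> q + t * int n < hi \<tau>"
          then have "\<not> act S' (lo \<tau>)" using between_res[of "lo \<tau>" t] aS by simp
          then show False using a by simp
        qed
      qed
      show "\<not> crosses n e \<tau> \<and> \<not> crosses n \<tau> e" using c1 c2 by simp
    qed
    define T where "T = insert e T'"
    have T'prop: "\<And>\<tau>. \<tau> \<in> T' \<Longrightarrow> act S' (lo \<tau>) \<and> act S' (hi \<tau>) \<and> lo \<tau> < hi \<tau>"
      using T' lo_hi unfolding good_def sarc_def by blast
    have g1: "\<forall>\<tau>\<in>T. sarc S \<tau> \<and> \<not> cons S (lo \<tau>) (hi \<tau>) \<and> f \<tau> = 1"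
    proof
      fix \<tau> assume "\<tau> \<in> T"
      then consider "\<tau> = e" | "\<tau> \<in> T'" unfolding T_def by blast
      then show "sarc S \<tau> \<and> \<not> cons S (lo \<tau>) (hi \<tau>) \<and> f \<tau> = 1"
      proof cases
        case 1 then show ?thesis using sarc_e ncons_e fe lhe by simp
      next
        case 2
        then have h: "sarc S' \<tau>" "\<not> cons S' (lo \<tau>) (hi \<tau>)" "f \<tau> = 1" using T' unfolding good_def by auto
        have "sarc S \<tau>" using h(1) actS' unfolding sarc_def by auto
        moreover have "\<not> cons S (lo \<tau>) (hi \<tau>)"
          using h(1,2) cons_sub[of S "lo \<tau>" "hi \<tau>" r] unfolding sarc_def S'_def by auto
        ultimately show ?thesis using h(3) by simp
      qed
    qed
    have g2: "\<forall>\<tau>\<in>T. \<forall>\<sigma>\<in>T. \<not> crosses n \<tau> \<sigma>"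
    proof (intro ballI)
      fix \<tau> \<sigma> assume "\<tau> \<in> T" "\<sigma> \<in> T"
      then consider "\<tau> = e" "\<sigma> = e" | "\<tau> = e" "\<sigma> \<in> T'" | "\<tau> \<in> T'" "\<sigma> = e" | "\<tau> \<in> T'" "\<sigma> \<in> T'"
        unfolding T_def by blast
      then show "\<not> crosses n \<tau> \<sigma>"
      proof cases
        case 1 then show ?thesis using nocross[of e] lhe pS' qS' ord by simp
      next
        case 2 then show ?thesis using nocross[of \<sigma>] T'prop by blast
      next
        case 3 then show ?thesis using nocross[of \<tau>] T'prop by blast
      next
        case 4 then show ?thesis using T' unfolding good_def by blast
      qed
    qed
    have g3: "\<forall>\<sigma>. sarc S \<sigma> \<longrightarrow> \<not> cons S (lo \<sigma>) (hi \<sigma>) \<longrightarrow> \<sigma> \<notin> T \<longrightarrow> (\<exists>\<tau>\<in>T. crosses n \<tau> \<sigma>)"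
    proof (intro allI impI)
      fix \<sigma> assume s: "sarc S \<sigma>" and nc: "\<not> cons S (lo \<sigma>) (hi \<sigma>)" and nT: "\<sigma> \<notin> T"
      have mem: "\<sigma> \<in> orb_arcs n" and aS: "act S (lo \<sigma>)" "act S (hi \<sigma>)" using s unfolding sarc_def by auto
      have lhs: "0 \<le> lo \<sigma>" "lo \<sigma> < int n" "lo \<sigma> < hi \<sigma>" "hi \<sigma> - lo \<sigma> \<le> int n" using lo_hi[OF mem] by auto
      show "\<exists>\<tau>\<in>T. crosses n \<tau> \<sigma>"
      proof (cases "act S' (lo \<sigma>) \<and> act S' (hi \<sigma>)")
        case True
        then have s': "sarc S' \<sigma>" using mem unfolding sarc_def by simp
        show ?thesis
        proof (cases "cons S' (lo \<sigma>) (hi \<sigma>)")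
          case True
          obtain k where k: "lo \<sigma> = p + k * int n" "hi \<sigma> = q + k * int n"
            using gap[OF _ _ True nc] \<open>act S' (lo \<sigma>) \<and> act S' (hi \<sigma>)\<close> by blast
          have "k = 0"
          proof (rule ccontr)
            assume "k \<noteq> 0"
            then have "k \<ge> 1 \<or> k \<le> -1" by linarith
            then have "k * int n \<ge> int n \<or> k * int n \<le> - int n"
              by (metis mult_le_cancel_right2 mult_minus_left mult_right_mono of_nat_0_le_iff mult_cancel_right1 linorder_le_cases mult_le_cancel_right1)
            then show False using k lhs p0n by linarith
          qed
          then have "lo \<sigma> = p" "hi \<sigma> = q" using k by auto
          then have "\<sigma> = e" unfolding e_def lo_def hi_def by (cases \<sigma>) auto
          then show ?thesis using nT unfolding T_def by simp
        next
          case False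
          then obtain \<tau> where "\<tau> \<in> T'" "crosses n \<tau> \<sigma>" using T' s' unfolding good_def
            using nT T_def by blast
          then show ?thesis unfolding T_def by blast
        qed
      next
        case False
        then consider "\<not> act S' (lo \<sigma>)" | "\<not> act S' (hi \<sigma>)" by blast
        then show ?thesis
        proof cases
          case 1
          then have "lo \<sigma> mod int n = y mod int n" using aS actS' by auto
          then obtain t where t: "y = lo \<sigma> + t * int n" using res_shift by metis
          have ah: "act S (hi \<sigma> + t * int n)" using aS act_shift by simp
          have "q \<le> hi \<sigma> + t * int n" using cons_le_next[OF yq ah] t lhs by simp
          moreover have "q \<noteq> hi \<sigma> + t * int n"
          proof
            assume "q = hi \<sigma> + t * int n"
            then have "cons S (lo \<sigma> + t * int n) (hi \<sigma> + t * int n)" using yq t by simp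
            then show False using nc cons_shift by simp
          qed
          ultimately have "crosses n e \<sigma>" unfolding crosses_iff lhe using t ord by (intro exI[of _ t]) auto
          then show ?thesis unfolding T_def by blast
        next
          case 2
          then have "hi \<sigma> mod int n = y mod int n" using aS actS' by auto
          then obtain t where t: "y = hi \<sigma> + t * int n" using res_shift by metis
          have al: "act S (lo \<sigma> + t * int n)" using aS act_shift by simp
          have "lo \<sigma> + t * int n \<le> p" using cons_le_prev[OF py al] t lhs by simp
          moreover have "lo \<sigma> + t * int n \<noteq> p"
          proof
            assume "lo \<sigma> + t * int n = p"
            then have "cons S (lo \<sigma> + t * int n) (hi \<sigma> + t * int n)" using py t by simp
            then show False using nc cons_shift by simp
          qed
          ultimately have "crosses n e \<sigma>" unfolding crosses_iff lhe using t ord by (intro exI[of _ t]) auto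
          then show ?thesis unfolding T_def by blast
        qed
      qed
    qed
    have "good S T" unfolding good_def using g1 g2 g3 by blast
    then show ?thesis by blast
  qed
qed

end


context ofr
begin

lemma act_all: "act {..<n} z"
proof -
  have "z mod int n < int n" "0 \<le> z mod int n" using n1 by auto
  then show ?thesis unfolding act_def by auto
qed

lemma cons_all: "cons {..<n} x y \<longleftrightarrow> y = x + 1"
proof
  assume c: "cons {..<n} x y"
  then have "x < y" unfolding cons_def by simp
  moreover have "\<not> x + 1 < y" using c act_all unfolding cons_def by force
  ultimately show "y = x + 1" by simp
next
  assume "y = x + 1"
  then show "cons {..<n} x y" unfolding cons_def using act_all by auto
qed

lemma cons_all_arc: "\<tau> \<in> orb_arcs n \<Longrightarrow> cons {..<n} (lo \<tau>) (hi \<tau>) \<longleftrightarrow> is_boundary_seg \<tau>"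
  unfolding cons_all is_boundary_seg_def lo_def hi_def by auto

theorem exists_unique_tri: "\<exists>!T. is_triangulation n T \<and> (\<forall>\<tau>\<in>T. f \<tau> = 1)"
proof -
  have hyp: "\<forall>\<tau>. sarc {..<n} \<tau> \<longrightarrow> cons {..<n} (lo \<tau>) (hi \<tau>) \<longrightarrow> f \<tau> = 1"
  proof (intro allI impI)
    fix \<tau> assume s: "sarc {..<n} \<tau>" and c: "cons {..<n} (lo \<tau>) (hi \<tau>)"
    have mem: "\<tau> \<in> orb_arcs n" using s unfolding sarc_def by simp
    then have "snd \<tau> = 1" using cons_all_arc c unfolding is_boundary_seg_def by simp
    moreover have "fst \<tau> < n" using mem unfolding orb_arcs_def by auto
    ultimately show "f \<tau> = 1" using pif unfolding positive_integral_frieze_def is_frieze_def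
      by (cases \<tau>) auto
  qed
  obtain T where T: "good {..<n} T"
  proof -
    have "0 \<in> {..<n}" using n1 by simp
    then have "{..<n} \<noteq> {}" by blast
    then show ?thesis using main[OF refl _ _ hyp] that by blast
  qed
  have sarc_all: "\<And>\<tau>. sarc {..<n} \<tau> \<longleftrightarrow> \<tau> \<in> orb_arcs n" unfolding sarc_def using act_all by simp
  have tri: "is_triangulation n T \<and> (\<forall>\<tau>\<in>T. f \<tau> = 1)"
    using T cons_all_arc unfolding good_def is_triangulation_def sarc_all by blast
  have uniq: "T2 = T" if t2: "is_triangulation n T2 \<and> (\<forall>\<tau>\<in>T2. f \<tau> = 1)" for T2
  proof -
    have sub: "A \<subseteq> B" if a: "is_triangulation n A \<and> (\<forall>\<tau>\<in>A. f \<tau> = 1)"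
       and b: "is_triangulation n B \<and> (\<forall>\<tau>\<in>B. f \<tau> = 1)" for A B
    proof
      fix \<sigma> assume sA: "\<sigma> \<in> A"
      show "\<sigma> \<in> B"
      proof (rule ccontr)
        assume "\<sigma> \<notin> B"
        have "\<sigma> \<in> orb_arcs n" "\<not> is_boundary_seg \<sigma>" using a sA unfolding is_triangulation_def by auto
        then obtain \<tau> where \<tau>: "\<tau> \<in> B" "crosses n \<tau> \<sigma>" using b \<open>\<sigma> \<notin> B\<close> unfolding is_triangulation_def by blast
        have "\<tau> \<in> orb_arcs n" using b \<tau> unfolding is_triangulation_def by auto
        then have "f \<tau> * f \<sigma> \<ge> 2" using cross_ge2 \<tau> \<open>\<sigma> \<in> orb_arcs n\<close> by blast
        moreover have "f \<tau> = 1" "f \<sigma> = 1" using a b sA \<tau> by auto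
        ultimately show False by simp
      qed
    qed
    show ?thesis using sub[OF t2 tri] sub[OF tri t2] by blast
  qed
  show ?thesis using tri uniq by blast
qed

end

theorem proposition4p30:
  fixes n :: nat and f :: "nat \<times> nat \<Rightarrow> real"
  assumes "n \<ge> 1"
    and "positive_integral_frieze 3 n f"
  shows "\<exists>!T. is_triangulation n T \<and> (\<forall>\<tau>\<in>T. f \<tau> = 1)"
proof -
  interpret ofr n f using assms by unfold_locales
  show ?thesis by (rule exists_unique_tri)
qed


end
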